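(* Let $\varepsilon>0$ be rational and let $f:\mathbb{N}\to\mathbb{N}$ satisfy $f(n)\ge n\varepsilon$ for all $n\ge0$. Then for all $A\subseteq\mathbb{N}$ we have $\bar d(f[A])\le\frac{1}{\varepsilon}\bar d(A)$. In particular $f\in\mathscr{C}_{I_{\bar d=0}}$.
   Context: $\mathbb{N}=\{0,1,2,\dots\}$. For $A\subseteq\mathbb{N}$, $\bar d(A)=\limsup_{n\to\infty}\frac{|A\cap[0,n)|}{n}$. $\mathscr{C}_{I_{\bar d=0}}$ is the set of all finitary functions $f:\mathbb{N}^k\to\mathbb{N}$ ($k\ge1$) such that $\bar d(f[A^k])=0$ whenever $\bar d(A)=0$. *)

theory Defs
  imports Complex_Main "HOL-Library.Liminf_Limsup" "HOL-Library.Extended_Real"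
begin

definition upper_density :: "nat set \<Rightarrow> ereal" where
  "upper_density A = limsup (\<lambda>n. ereal (real (card (A \<inter> {0..<n})) / real n))"

text \<open>Finitary functions N^k \<rightarrow> N are represented as pairs (k, g) with
  g :: nat list \<Rightarrow> nat, a k-tuple being a list of length k (values of g on lists
  of other lengths are irrelevant). The image f[A^k] is the image of g on the
  length-k lists with entries in A.\<close>
definition C_Id0 :: "(nat \<times> (nat list \<Rightarrow> nat)) set" where
  "C_Id0 = {(k, g). k \<ge> 1 \<and>
     (\<forall>A. upper_density A = 0 \<longrightarrow>
        upper_density (g ` {xs. length xs = k \<and> set xs \<subseteq> A}) = 0)}"

end

theory Submission
  imports Defs "HOL-Analysis.Analysis"
begin

lemma Limsup_filter_mono':
  "F \<le> G \<Longrightarrow> Limsup F (f::_\<Rightarrow>'b::complete_lattice) \<le> Limsup G f"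
  unfolding Limsup_def by (rule INF_superset_mono) (auto simp: le_filter_def)

lemma upper_density_nonneg: "0 \<le> upper_density A"
  unfolding upper_density_def
  by (rule le_Limsup) auto

lemma density_bound:
  fixes \<epsilon> :: real and f :: "nat \<Rightarrow> nat"
  assumes "\<epsilon> > 0"
    and fge: "\<And>n. real (f n) \<ge> real n * \<epsilon>"
  shows "upper_density (f ` A) \<le> ereal (1 / \<epsilon>) * upper_density A"
proof -
  define a where "a n = ereal (real (card (A \<inter> {0..<n})) / real n)" for n
  define N where "N m = nat \<lceil>real m / \<epsilon>\<rceil>" for m
  define u where "u m = ereal (real (N m) / real m)" for m
  have Nr: "real (N m) = real_of_int \<lceil>real m / \<epsilon>\<rceil>" for m
    using assms(1) by (simp add: N_def)
  have Nge: "real m / \<epsilon> \<le> real (N m)" for m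
    by (simp add: Nr)
  have Nlt: "real (N m) \<le> real m / \<epsilon> + 1" for m
    by (simp add: Nr of_int_ceiling_le_add_one)
  have card_le: "card (f ` A \<inter> {0..<m}) \<le> card (A \<inter> {0..<N m})" for m
  proof -
    have "f ` A \<inter> {0..<m} \<subseteq> f ` (A \<inter> {0..<N m})"
    proof
      fix y assume "y \<in> f ` A \<inter> {0..<m}"
      then obtain x where x: "x \<in> A" "y = f x" "f x < m" by auto
      have "real x * \<epsilon> < real m" using fge[of x] x(3) by linarith
      hence "real x < real m / \<epsilon>" using assms(1) by (simp add: field_simps)
      hence "real x < real (N m)" using Nge[of m] by linarith
      hence "x < N m" by simp
      thus "y \<in> f ` (A \<inter> {0..<N m})" using x by auto
    qed
    hence "card (f ` A \<inter> {0..<m}) \<le> card (f ` (A \<inter> {0..<N m}))"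
      by (intro card_mono) auto
    also have "\<dots> \<le> card (A \<inter> {0..<N m})" by (rule card_image_le) auto
    finally show ?thesis .
  qed
  have step2: "ereal (real (card (f ` A \<inter> {0..<m})) / real m) \<le> u m * a (N m)"
    if "m \<ge> 1" for m
  proof -
    have Npos: "real (N m) > 0" using Nge[of m] that assms(1)
      by (smt (verit) divide_pos_pos of_nat_0_less_iff less_le_trans zero_less_one le_less_trans not_le)
    have "real (card (f ` A \<inter> {0..<m})) / real m \<le> real (card (A \<inter> {0..<N m})) / real m"
      using card_le[of m] that by (intro divide_right_mono) auto
    also have "\<dots> = (real (N m) / real m) * (real (card (A \<inter> {0..<N m})) / real (N m))"
      using Npos by simp
    finally show ?thesis by (simp add: u_def a_def)
  qed
  have ulim: "u \<longlonglongrightarrow> ereal (1/\<epsilon>)"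
    unfolding u_def
  proof (rule lim_ereal[THEN iffD2], rule tendsto_sandwich)
    show "eventually (\<lambda>m. 1/\<epsilon> \<le> real (N m) / real m) sequentially"
      using eventually_ge_at_top[of "1::nat"]
    proof eventually_elim
      case (elim m) thus ?case using Nge[of m] assms(1) by (simp add: field_simps)
    qed
    show "eventually (\<lambda>m. real (N m) / real m \<le> 1/\<epsilon> + 1 / real m) sequentially"
      using eventually_ge_at_top[of "1::nat"]
    proof eventually_elim
      case (elim m)
      have "real (N m) \<le> real m / \<epsilon> + 1" using Nlt[of m] by linarith
      hence "real (N m) / real m \<le> (real m / \<epsilon> + 1) / real m"
        by (intro divide_right_mono) auto
      also have "\<dots> = 1/\<epsilon> + 1 / real m" using elim by (simp add: field_simps)
      finally show ?case .
    qed
    show "(\<lambda>m. 1/\<epsilon>) \<longlonglongrightarrow> 1/\<epsilon>" by simp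
    show "(\<lambda>m. 1/\<epsilon> + 1 / real m) \<longlonglongrightarrow> 1/\<epsilon>"
      using tendsto_add[OF tendsto_const[of "1/\<epsilon>"] lim_inverse_n'] by simp
  qed
  have Nlim: "filterlim N sequentially sequentially"
    unfolding filterlim_at_top
  proof
    fix Z :: nat
    show "eventually (\<lambda>m. Z \<le> N m) sequentially"
      using eventually_ge_at_top[of "nat \<lceil>real Z * \<epsilon>\<rceil>"]
    proof eventually_elim
      case (elim m)
      hence "real Z * \<epsilon> \<le> real m" by linarith
      hence "real Z \<le> real m / \<epsilon>" using assms(1) by (simp add: field_simps)
      hence "real Z \<le> real (N m)" using Nge[of m] by linarith
      thus ?case by simp
    qed
  qed
  have "upper_density (f ` A) \<le> limsup (\<lambda>m. u m * a (N m))"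
    unfolding upper_density_def
    by (rule Limsup_mono[OF eventually_mono[OF eventually_ge_at_top[of "1::nat"] step2]])
  also have "\<dots> = ereal (1/\<epsilon>) * limsup (\<lambda>m. a (N m))"
    by (rule ereal_limsup_lim_mult[OF ulim]) (use assms(1) in auto)
  also have "limsup (\<lambda>m. a (N m)) \<le> limsup a"
  proof -
    have "limsup (\<lambda>m. a (N m)) \<le> Limsup (filtermap N sequentially) a"
      by (rule Limsup_filtermap_ge)
    also have "\<dots> \<le> limsup a"
      using Nlim unfolding filterlim_def by (rule Limsup_filter_mono')
    finally show ?thesis .
  qed
  hence "ereal (1/\<epsilon>) * limsup (\<lambda>m. a (N m)) \<le> ereal (1/\<epsilon>) * limsup a"
    by (rule ereal_mult_left_mono) (use assms(1) in auto)
  finally show ?thesis unfolding upper_density_def a_def .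
qed

theorem mainTheorem9:
  fixes \<epsilon> :: real and f :: "nat \<Rightarrow> nat"
  assumes "\<epsilon> \<in> \<rat>" and "\<epsilon> > 0"
    and "\<And>n. real (f n) \<ge> real n * \<epsilon>"
  shows "(\<forall>A. upper_density (f ` A) \<le> ereal (1 / \<epsilon>) * upper_density A)
         \<and> (1, \<lambda>xs. f (hd xs)) \<in> C_Id0"
proof -
  have D: "\<forall>A. upper_density (f ` A) \<le> ereal (1 / \<epsilon>) * upper_density A"
    using density_bound[OF assms(2,3)] by blast
  have img: "(\<lambda>xs. f (hd xs)) ` {xs. length xs = 1 \<and> set xs \<subseteq> A} = f ` A" for A
  proof
    show "(\<lambda>xs. f (hd xs)) ` {xs. length xs = 1 \<and> set xs \<subseteq> A} \<subseteq> f ` A"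
      by (auto simp: length_Suc_conv)
    show "f ` A \<subseteq> (\<lambda>xs. f (hd xs)) ` {xs. length xs = 1 \<and> set xs \<subseteq> A}"
    proof
      fix y assume "y \<in> f ` A"
      then obtain x where "x \<in> A" "y = f x" by auto
      thus "y \<in> (\<lambda>xs. f (hd xs)) ` {xs. length xs = 1 \<and> set xs \<subseteq> A}"
        by (intro image_eqI[of _ _ "[x]"]) auto
    qed
  qed
  have Z: "\<forall>A. upper_density A = 0 \<longrightarrow> upper_density (f ` A) = 0"
  proof (intro allI impI)
    fix A assume A0: "upper_density A = 0"
    have "upper_density (f ` A) \<le> 0" using D[rule_format, of A] A0 by simp
    thus "upper_density (f ` A) = 0" using upper_density_nonneg[of "f ` A"] by simp
  qed
  have "(1, \<lambda>xs. f (hd xs)) \<in> C_Id0"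
    unfolding C_Id0_def using Z by (simp add: img[simplified])
  with D show ?thesis by blast
qed

end
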